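(* Let $c\in(0,1)$ and let $\sigma>0$ satisfy $C_{\mathrm{BS}}(\sigma)=c$. Define $$U_{23}(c)=H\!\left(\min\left(\frac{1+c}{2},\; c+e^k\,\Phi(-\sqrt{2k})\right)\right).$$ Then $\sigma\le U_{23}(c)$. Moreover, with $U_3(c)=-\Phi^{-1}\!\left(\frac{1-c}{2}\right)-\Phi^{-1}\!\left(\frac{1-c}{2e^k}\right)$ and, for $0<c<1-e^k\Phi(-\sqrt{2k})$, $U_2(c)=\Phi^{-1}\!\left(c+e^k\Phi(-\sqrt{2k})\right)+\sqrt{2k}$, one has $U_{23}(c)=\min(U_2(c),U_3(c))$ whenever $U_2(c)$ is defined, and $U_{23}(c)=U_3(c)$ otherwise.
   Context: Fix $k\ge 0$. Let $\Phi$ and $\phi$ denote the standard normal distribution function and density. For $\sigma>0$ put $d_1(\sigma)=-k/\sigma+\sigma/2$, $d_2(\sigma)=-k/\sigma-\sigma/2$, and $C_{\mathrm{BS}}(\sigma)=\Phi(d_1(\sigma))-e^k\,\Phi(d_2(\sigma))$. The map $C_{\mathrm{BS}}$ is a strictly increasing bijection from $(0,\infty)$ onto $(0,1)$; for $c\in(0,1)$ the implied volatility is the unique $\sigma>0$ with $C_{\mathrm{BS}}(\sigma)=c$. For $c<\mathcal D<1$ define $H(\mathcal D)=\Phi^{-1}(\mathcal D)-\Phi^{-1}\!\left(\frac{\mathcal D-c}{e^k}\right)$. *)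

theory Defs
  imports "HOL-Probability.Probability"
begin

definition Phi :: "real \<Rightarrow> real" where
  "Phi x = cdf (density lborel std_normal_density) x"

definition Phi_inv :: "real \<Rightarrow> real" where
  "Phi_inv p = (THE x. Phi x = p)"

definition d1 :: "real \<Rightarrow> real \<Rightarrow> real" where
  "d1 k \<sigma> = - k / \<sigma> + \<sigma> / 2"

definition d2 :: "real \<Rightarrow> real \<Rightarrow> real" where
  "d2 k \<sigma> = - k / \<sigma> - \<sigma> / 2"

definition C_BS :: "real \<Rightarrow> real \<Rightarrow> real" where
  "C_BS k \<sigma> = Phi (d1 k \<sigma>) - exp k * Phi (d2 k \<sigma>)"

text \<open>H depends on the parameters k and c; meant for c < D < 1.\<close>
definition H :: "real \<Rightarrow> real \<Rightarrow> real \<Rightarrow> real" where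
  "H k c D = Phi_inv D - Phi_inv ((D - c) / exp k)"

definition U23 :: "real \<Rightarrow> real \<Rightarrow> real" where
  "U23 k c = H k c (min ((1 + c) / 2) (c + exp k * Phi (- sqrt (2 * k))))"

definition U3 :: "real \<Rightarrow> real \<Rightarrow> real" where
  "U3 k c = - Phi_inv ((1 - c) / 2) - Phi_inv ((1 - c) / (2 * exp k))"

text \<open>Meant for 0 < c < 1 - exp k * Phi (- sqrt (2 k)).\<close>
definition U2 :: "real \<Rightarrow> real \<Rightarrow> real" where
  "U2 k c = Phi_inv (c + exp k * Phi (- sqrt (2 * k))) + sqrt (2 * k)"

end

theory Submission
  imports Defs
begin


lemma Phi_real_dist: "real_distribution (density lborel std_normal_density)"
  using prob_space_normal_density by (auto simp: real_distribution_def real_distribution_axioms_def)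

lemma cont_phi: "continuous_on S std_normal_density"
  unfolding std_normal_density_def by (intro continuous_intros) auto

lemma Phi_diff: assumes "a < b" shows "Phi b - Phi a = integral {a..b} std_normal_density"
proof -
  interpret real_distribution "density lborel std_normal_density" by (rule Phi_real_dist)
  have 1: "Phi b - Phi a = measure (density lborel std_normal_density) {a<..b}"
    unfolding Phi_def using cdf_diff_eq[OF assms] .
  have int: "(std_normal_density has_integral integral {a..b} std_normal_density) {a..b}"
    using integrable_continuous_interval[OF cont_phi] by (simp add: has_integral_integral)
  have int2: "(std_normal_density has_integral integral {a..b} std_normal_density) {a<..b}"
  proof (subst has_integral_spike_set_eq[symmetric])
    show "negligible {x \<in> {a..b} - {a<..b}. std_normal_density x \<noteq> 0}"
      by (rule negligible_subset[of "{a}"]) auto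
    show "negligible {x \<in> {a<..b} - {a..b}. std_normal_density x \<noteq> 0}"
      by (rule negligible_subset[of "{}"]) auto
  qed (rule int)
  have "emeasure (density lborel std_normal_density) {a<..b} = (\<integral>\<^sup>+ x. ennreal (std_normal_density x) * indicator {a<..b} x \<partial>lborel)"
    by (subst emeasure_density) auto
  also have "\<dots> = ennreal (integral {a..b} std_normal_density)"
    by (rule nn_integral_has_integral_lebesgue'[OF _ int2]) simp
  finally have "measure (density lborel std_normal_density) {a<..b} = integral {a..b} std_normal_density"
    unfolding measure_def using int by (simp add: integral_nonneg has_integral_integrable)
  with 1 show ?thesis by simp
qed

lemma Phi_deriv: "(Phi has_real_derivative std_normal_density x) (at x)"
proof -
  define a where "a = x - 1"
  have "((\<lambda>y. integral {a..y} std_normal_density) has_real_derivative std_normal_density x) (at x within {a..x+1})"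
    by (rule integral_has_real_derivative[OF cont_phi]) (auto simp: a_def)
  moreover have "x \<in> interior {a..x+1}" by (simp add: a_def)
  then have eq: "at x within {a..x+1} = at x" by (rule at_within_interior)
  ultimately have "((\<lambda>y. integral {a..y} std_normal_density) has_real_derivative std_normal_density x) (at x)"
    by (simp only: eq)
  then have "((\<lambda>y. Phi a + integral {a..y} std_normal_density) has_real_derivative std_normal_density x) (at x)"
    by (auto intro!: derivative_eq_intros)
  then show ?thesis
  proof (rule has_field_derivative_transform_within_open[where S="{a<..}"])
    show "x \<in> {a<..}" by (simp add: a_def)
    fix y assume "y \<in> {a<..}"
    then show "Phi a + integral {a..y} std_normal_density = Phi y" using Phi_diff[of a y] by simp
  qed auto
qed

lemma Phi_deriv_chain[derivative_intros]:
  "(f has_real_derivative f') (at x within S) \<Longrightarrow>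
   ((\<lambda>x. Phi (f x)) has_real_derivative std_normal_density (f x) * f') (at x within S)"
  by (rule DERIV_chain2[OF Phi_deriv])

lemma Phi_isCont: "isCont Phi x"
  using Phi_deriv DERIV_isCont by blast

lemma Phi_cont_on: "continuous_on S Phi"
  using Phi_isCont by (simp add: continuous_at_imp_continuous_on)

lemma phi_pos: "std_normal_density x > 0"
  by (simp add: normal_density_pos)

lemma Phi_less: "x < y \<Longrightarrow> Phi x < Phi y"
  by (rule DERIV_pos_imp_increasing[of x y Phi]) (use Phi_deriv phi_pos in auto)

lemma Phi_le_iff: "Phi x \<le> Phi y \<longleftrightarrow> x \<le> y"
  using Phi_less[of x y] Phi_less[of y x] by (cases x y rule: linorder_cases) auto

lemma Phi_less_iff: "Phi x < Phi y \<longleftrightarrow> x < y"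
  using Phi_less[of x y] Phi_less[of y x] by (cases x y rule: linorder_cases) auto

lemma Phi_inj: "Phi x = Phi y \<longleftrightarrow> x = y"
  using Phi_less[of x y] Phi_less[of y x] by (cases x y rule: linorder_cases) auto

lemma Phi_bot: "(Phi \<longlongrightarrow> 0) at_bot"
proof -
  interpret real_distribution "density lborel std_normal_density" by (rule Phi_real_dist)
  show ?thesis unfolding Phi_def[abs_def] by (rule cdf_lim_at_bot)
qed

lemma Phi_top: "(Phi \<longlongrightarrow> 1) at_top"
proof -
  interpret real_distribution "density lborel std_normal_density" by (rule Phi_real_dist)
  show ?thesis unfolding Phi_def[abs_def] by (rule cdf_lim_at_top_prob)
qed

lemma Phi_nonneg: "0 \<le> Phi x" and Phi_le1: "Phi x \<le> 1"
proof -
  interpret real_distribution "density lborel std_normal_density" by (rule Phi_real_dist)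
  show "0 \<le> Phi x" "Phi x \<le> 1" unfolding Phi_def using cdf_nonneg cdf_bounded_prob by auto
qed

lemma Phi_pos: "0 < Phi x"
  using Phi_less[of "x-1" x] Phi_nonneg[of "x-1"] by simp

lemma Phi_lt1: "Phi x < 1"
  using Phi_less[of x "x+1"] Phi_le1[of "x+1"] by simp

lemma Phi_surj: assumes "0 < p" "p < 1" shows "\<exists>x. Phi x = p"
proof -
  have "eventually (\<lambda>x. Phi x < p) at_bot"
    using order_tendstoD(2)[OF Phi_bot assms(1)] .
  then obtain a where a: "Phi a < p" by (auto simp: eventually_at_bot_linorder)
  have "eventually (\<lambda>x. Phi x > p) at_top"
    using order_tendstoD(1)[OF Phi_top assms(2)] .
  then obtain b where b: "Phi b > p" by (auto simp: eventually_at_top_linorder)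
  have ab: "a \<le> b" using a b Phi_le_iff[of b a] by linarith
  have "\<exists>x\<ge>a. x \<le> b \<and> Phi x = p" using IVT[of Phi a p b] a b ab Phi_isCont by auto
  then show ?thesis by blast
qed

lemma Phi_Phi_inv: assumes "0 < p" "p < 1" shows "Phi (Phi_inv p) = p"
proof -
  obtain x where x: "Phi x = p" using Phi_surj[OF assms] by blast
  have "Phi_inv p = x" unfolding Phi_inv_def
    by (rule the_equality) (use x Phi_inj in auto)
  then show ?thesis using x by simp
qed

lemma Phi_inv_Phi: "Phi_inv (Phi x) = x"
  unfolding Phi_inv_def using Phi_inj by simp

lemma phi_even: "std_normal_density (-x) = std_normal_density x"
  by (simp add: std_normal_density_def)

lemma Phi_neg: "Phi (-x) = 1 - Phi x"
proof -
  define f where "f y = Phi y + Phi (-y)" for y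
  have d: "\<forall>y. (f has_real_derivative 0) (at y)"
    unfolding f_def by (auto intro!: derivative_eq_intros simp: phi_even)
  have eq: "\<And>y. f y = f x" using DERIV_isconst_all[OF d] by metis
  have t1: "(f \<longlongrightarrow> 1 + 0) at_top"
    unfolding f_def
    by (intro tendsto_add Phi_top filterlim_compose[OF Phi_bot filterlim_uminus_at_bot_at_top])
  have "f = (\<lambda>_. f x)" using eq by auto
  have t2: "(f \<longlongrightarrow> f x) at_top" using eq by (intro tendsto_eventually always_eventually) blast
  have "f x = 1" using tendsto_unique[OF _ t2 t1] by simp
  then show ?thesis unfolding f_def by simp
qed

lemma Phi_0: "Phi 0 = 1/2"
  using Phi_neg[of 0] by simp

lemma Phi_inv_le: assumes "0 < p" "p \<le> q" "q < 1" shows "Phi_inv p \<le> Phi_inv q"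
  using Phi_le_iff[of "Phi_inv p" "Phi_inv q"] Phi_Phi_inv[of p] Phi_Phi_inv[of q] assms by simp

lemma f_deriv:
  "((\<lambda>t. Phi t - exp k * Phi (t - s)) has_real_derivative
     std_normal_density t - exp k * std_normal_density (t - s)) (at t)"
  by (auto intro!: derivative_eq_intros)

lemma f_deriv_sign_le:
  assumes "s\<^sup>2 - 2 * t * s \<le> 2 * k"
  shows "std_normal_density t - exp k * std_normal_density (t - s) \<le> 0"
proof -
  have e: "k + - (t - s)\<^sup>2 / 2 = - t\<^sup>2 / 2 + (2 * k + 2 * t * s - s\<^sup>2) / 2"
    by (simp add: power2_eq_square field_simps)
  have "- t\<^sup>2 / 2 \<le> k + - (t - s)\<^sup>2 / 2" unfolding e using assms by (simp add: field_simps)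
  then have "exp (- t\<^sup>2 / 2) \<le> exp k * exp (- (t - s)\<^sup>2 / 2)"
    by (simp add: exp_add[symmetric])
  then show ?thesis unfolding std_normal_density_def
    by (simp add: mult_left_mono divide_simps)
qed

lemma f_deriv_sign_ge:
  assumes "s\<^sup>2 - 2 * t * s \<ge> 2 * k"
  shows "std_normal_density t - exp k * std_normal_density (t - s) \<ge> 0"
proof -
  have e: "k + - (t - s)\<^sup>2 / 2 = - t\<^sup>2 / 2 + (2 * k + 2 * t * s - s\<^sup>2) / 2"
    by (simp add: power2_eq_square field_simps)
  have "- t\<^sup>2 / 2 \<ge> k + - (t - s)\<^sup>2 / 2" unfolding e using assms by (simp add: field_simps)
  then have "exp (- t\<^sup>2 / 2) \<ge> exp k * exp (- (t - s)\<^sup>2 / 2)"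
    by (simp add: exp_add[symmetric])
  then show ?thesis unfolding std_normal_density_def
    by (simp add: mult_left_mono divide_simps)
qed

lemma f_decr:
  assumes "s \<ge> 0" "s\<^sup>2 - 2 * x0 * s \<le> 2 * k" "x0 \<le> t1" "t1 \<le> t2"
  shows "Phi t2 - exp k * Phi (t2 - s) \<le> Phi t1 - exp k * Phi (t1 - s)"
proof (rule DERIV_nonpos_imp_nonincreasing[OF assms(4)])
  fix t assume t1: "t1 \<le> t" and t2: "t \<le> t2"
  note t = t1 t2
  have "s * x0 \<le> s * t" using t assms by (intro mult_left_mono) auto
  then have "s\<^sup>2 - 2 * t * s \<le> 2 * k" using assms(2) by (simp add: algebra_simps)
  then show "\<exists>y. ((\<lambda>t. Phi t - exp k * Phi (t - s)) has_real_derivative y) (at t) \<and> y \<le> 0"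
    using f_deriv f_deriv_sign_le by blast
qed

lemma f_incr:
  assumes "s \<ge> 0" "s\<^sup>2 - 2 * x0 * s \<ge> 2 * k" "t1 \<le> t2" "t2 \<le> x0"
  shows "Phi t1 - exp k * Phi (t1 - s) \<le> Phi t2 - exp k * Phi (t2 - s)"
proof (rule DERIV_nonneg_imp_nondecreasing[OF assms(3)])
  fix t assume t1: "t1 \<le> t" and t2: "t \<le> t2"
  note t = t1 t2
  have "s * t \<le> s * x0" using t assms by (intro mult_left_mono) auto
  then have "s\<^sup>2 - 2 * t * s \<ge> 2 * k" using assms(2) by (simp add: algebra_simps)
  then show "\<exists>y. ((\<lambda>t. Phi t - exp k * Phi (t - s)) has_real_derivative y) (at t) \<and> y \<ge> 0"
    using f_deriv f_deriv_sign_ge by blast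
qed

lemma f_le_CBS:
  assumes "s > 0"
  shows "Phi x - exp k * Phi (x - s) \<le> C_BS k s"
proof -
  have d2: "d2 k s = d1 k s - s" unfolding d1_def d2_def by simp
  have key: "s\<^sup>2 - 2 * d1 k s * s = 2 * k" unfolding d1_def using assms
    by (simp add: power2_eq_square field_simps)
  show ?thesis
  proof (cases "x \<le> d1 k s")
    case True
    then show ?thesis unfolding C_BS_def d2 using f_incr[of s k "d1 k s" x "d1 k s"] key assms True by simp
  next
    case False
    then show ?thesis unfolding C_BS_def d2 using f_decr[of s "d1 k s" k "d1 k s" x] key assms False by simp
  qed
qed

lemma H_point:
  assumes k: "k \<ge> 0" and "c < D" "D < 1" "0 < c"
  shows "0 < (D - c) / exp k" "(D - c) / exp k < 1"
    "Phi (Phi_inv D) - exp k * Phi (Phi_inv ((D - c) / exp k)) = c"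
proof -
  show p0: "0 < (D - c) / exp k" using assms by simp
  have "1 \<le> exp k" using k by simp
  moreover have "D - c < 1" using assms by simp
  ultimately have "D - c < exp k" by linarith
  then show p1: "(D - c) / exp k < 1" by (simp add: divide_simps)
  show "Phi (Phi_inv D) - exp k * Phi (Phi_inv ((D - c) / exp k)) = c"
    using Phi_Phi_inv[OF p0 p1] Phi_Phi_inv[of D] assms by simp
qed

lemma sigma_le_H:
  assumes k: "k \<ge> 0" and c: "0 < c" "c < D" "D < 1" and s: "\<sigma> > 0" "C_BS k \<sigma> = c"
  shows "\<sigma> \<le> H k c D"
proof (rule ccontr)
  assume "\<not> \<sigma> \<le> H k c D"
  then have lt: "H k c D < \<sigma>" by simp
  define x where "x = Phi_inv D"
  define y where "y = Phi_inv ((D - c) / exp k)"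
  have eq: "Phi x - exp k * Phi y = c" using H_point[OF k c(2) c(3) c(1)] x_def y_def by simp
  have "H k c D = x - y" unfolding H_def x_def y_def by simp
  then have "x - \<sigma> < y" using lt by simp
  then have "Phi (x - \<sigma>) < Phi y" by (rule Phi_less)
  then have "exp k * Phi (x - \<sigma>) < exp k * Phi y" by simp
  then have "c < Phi x - exp k * Phi (x - \<sigma>)" using eq by linarith
  also have "\<dots> \<le> C_BS k \<sigma>" by (rule f_le_CBS[OF s(1)])
  finally show False using s by simp
qed



lemma phi_deriv: "(std_normal_density has_real_derivative (- x * std_normal_density x)) (at x)"
proof -
  have "((\<lambda>x. exp (- x\<^sup>2 / 2)) has_real_derivative exp (- x\<^sup>2 / 2) * (- (2 * x) / 2)) (at x)"
    by (auto intro!: derivative_eq_intros)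
  from DERIV_cmult[OF this, of "1 / sqrt (2 * pi)"] show ?thesis
    unfolding std_normal_density_def by (simp add: algebra_simps)
qed

lemma phi_le1: "std_normal_density x \<le> 1"
proof -
  have "1 / sqrt (2 * pi) \<le> 1" using pi_gt3 by (simp add: divide_simps)
  moreover have "exp (- x\<^sup>2 / 2) \<le> 1" by simp
  ultimately show ?thesis unfolding std_normal_density_def
    using mult_mono[of "1 / sqrt (2 * pi)" 1 "exp (- x\<^sup>2 / 2)" 1] by simp
qed

lemma gordon: assumes "z > 0" shows "z * Phi (- z) \<le> std_normal_density z"
proof -
  define u where "u y = std_normal_density y / y - Phi (- y)" for y
  have mono: "u y \<le> u z" if "z \<le> y" for y
  proof (rule DERIV_nonpos_imp_nonincreasing[OF that])
    fix t assume t1: "z \<le> t" and t2: "t \<le> y"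
    have tp: "t > 0" using t1 assms by simp
    have "(u has_real_derivative (- std_normal_density t / t\<^sup>2)) (at t)"
      unfolding u_def using tp
      by (auto intro!: derivative_eq_intros phi_deriv simp: phi_even power2_eq_square field_simps)
    moreover have "- std_normal_density t / t\<^sup>2 \<le> 0" by (simp add: divide_nonneg_pos)
    ultimately show "\<exists>d. (u has_real_derivative d) (at t) \<and> d \<le> 0" by blast
  qed
  have lim1: "((\<lambda>y. std_normal_density y / y) \<longlongrightarrow> 0) at_top"
  proof (rule tendsto_sandwich[of "\<lambda>_. 0" _ _ "\<lambda>y. 1 / y"])
    show "\<forall>\<^sub>F y in at_top. 0 \<le> std_normal_density y / y"
      by (auto simp: eventually_at_top_linorder intro!: exI[of _ 1])
    show "\<forall>\<^sub>F y in at_top. std_normal_density y / y \<le> 1 / y"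
      by (auto simp: eventually_at_top_linorder phi_le1 divide_right_mono intro!: exI[of _ 1])
    show "((\<lambda>y. 1 / (y::real)) \<longlongrightarrow> 0) at_top"
      using tendsto_inverse_0_at_top[OF filterlim_ident] by (simp add: divide_inverse)
  qed simp
  have lim2: "((\<lambda>y. Phi (- y)) \<longlongrightarrow> 0) at_top"
    by (rule filterlim_compose[OF Phi_bot filterlim_uminus_at_bot_at_top])
  have lim: "(u \<longlongrightarrow> 0) at_top"
    unfolding u_def using tendsto_diff[OF lim1 lim2] by simp
  have "0 \<le> u z"
    by (rule tendsto_le[OF _ tendsto_const lim])
       (auto simp: eventually_at_top_linorder intro!: exI[of _ z] mono)
  then show ?thesis using assms unfolding u_def by (simp add: field_simps)
qed

lemma gordon0: assumes "z \<ge> 0" shows "z * Phi (- z) \<le> std_normal_density z"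
  using gordon[of z] assms by (cases "z = 0") auto

lemma mills: assumes "0 \<le> t" "t \<le> r"
  shows "exp (r\<^sup>2 / 2) * Phi (- r) \<le> exp (t\<^sup>2 / 2) * Phi (- t)"
proof (rule DERIV_nonpos_imp_nonincreasing[OF assms(2)])
  fix z assume z1: "t \<le> z" and z2: "z \<le> r"
  have "((\<lambda>z. exp (z\<^sup>2 / 2) * Phi (- z)) has_real_derivative
      exp (z\<^sup>2 / 2) * (z * Phi (- z) - std_normal_density z)) (at z)"
    by (auto intro!: derivative_eq_intros simp: phi_even algebra_simps)
  moreover have "exp (z\<^sup>2 / 2) * (z * Phi (- z) - std_normal_density z) \<le> 0"
    using gordon0[of z] z1 assms by (simp add: mult_nonneg_nonpos)
  ultimately show "\<exists>d. ((\<lambda>z. exp (z\<^sup>2 / 2) * Phi (- z)) has_real_derivative d) (at z) \<and> d \<le> 0"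
    by blast
qed

lemma mills2: assumes "0 \<le> t" "0 \<le> k"
  shows "exp k * Phi (- sqrt (t\<^sup>2 + 2 * k)) \<le> Phi (- t)"
proof -
  define r where "r = sqrt (t\<^sup>2 + 2 * k)"
  have r2: "r\<^sup>2 = t\<^sup>2 + 2 * k" unfolding r_def using assms by simp
  have "t \<le> r" unfolding r_def using assms by (simp add: real_le_rsqrt)
  then have "exp (r\<^sup>2 / 2) * Phi (- r) \<le> exp (t\<^sup>2 / 2) * Phi (- t)" using mills assms by simp
  also have "exp (r\<^sup>2 / 2) = exp (t\<^sup>2 / 2) * exp k" unfolding r2 by (simp add: exp_add[symmetric] add_divide_distrib)
  finally have "exp (t\<^sup>2 / 2) * (exp k * Phi (- r)) \<le> exp (t\<^sup>2 / 2) * Phi (- t)" by (simp add: mult.assoc)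
  then show ?thesis unfolding r_def by simp
qed

lemma H_mono:
  assumes k: "k \<ge> 0" and c: "0 < c" "c < D0" "D0 \<le> D1" "D1 < 1"
    and cond: "(Phi_inv ((D0 - c) / exp k))\<^sup>2 \<le> (Phi_inv D0)\<^sup>2 + 2 * k"
  shows "H k c D0 \<le> H k c D1"
proof (rule ccontr)
  assume "\<not> ?thesis"
  then have lt: "H k c D1 < H k c D0" by simp
  define x0 where "x0 = Phi_inv D0"
  define y0 where "y0 = Phi_inv ((D0 - c) / exp k)"
  define x1 where "x1 = Phi_inv D1"
  define y1 where "y1 = Phi_inv ((D1 - c) / exp k)"
  have D0: "D0 < 1" using c by simp
  have D1: "c < D1" using c by simp
  have e0: "Phi x0 - exp k * Phi y0 = c" using H_point[OF k c(2) D0 c(1)] x0_def y0_def by simp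
  have e1: "Phi x1 - exp k * Phi y1 = c" using H_point[OF k D1 c(4) c(1)] x1_def y1_def by simp
  have h0: "H k c D0 = x0 - y0" unfolding H_def x0_def y0_def by simp
  have h1: "H k c D1 = x1 - y1" unfolding H_def x1_def y1_def by simp
  have "1 \<le> exp k" using k by simp
  then have "Phi y0 \<le> exp k * Phi y0" using Phi_pos[of y0] by simp
  then have "Phi y0 < Phi x0" using e0 c by linarith
  then have yx: "y0 < x0" by (simp add: Phi_less_iff)
  define s0 where "s0 = x0 - y0"
  have s0: "s0 \<ge> 0" using yx s0_def by simp
  have "s0\<^sup>2 - 2 * x0 * s0 = y0\<^sup>2 - x0\<^sup>2" unfolding s0_def by (simp add: power2_eq_square algebra_simps)
  then have cnd: "s0\<^sup>2 - 2 * x0 * s0 \<le> 2 * k" using cond x0_def y0_def by simp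
  have "x0 \<le> x1" unfolding x0_def x1_def using c by (intro Phi_inv_le) auto
  then have "Phi x1 - exp k * Phi (x1 - s0) \<le> Phi x0 - exp k * Phi (x0 - s0)"
    using f_decr[of s0 x0 k x0 x1] s0 cnd by simp
  also have "x0 - s0 = y0" unfolding s0_def by simp
  finally have le: "Phi x1 - exp k * Phi (x1 - s0) \<le> c" using e0 by simp
  have "x1 - s0 < y1" using lt h0 h1 s0_def by simp
  then have "Phi (x1 - s0) < Phi y1" by (rule Phi_less)
  then have "exp k * Phi (x1 - s0) < exp k * Phi y1" by simp
  then show False using le e1 by linarith
qed

theorem corollary4p1:
  fixes k c \<sigma> :: real
  assumes "k \<ge> 0" and "0 < c" and "c < 1"
    and "\<sigma> > 0" and "C_BS k \<sigma> = c"
  shows "\<sigma> \<le> U23 k c \<and>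
    (c < 1 - exp k * Phi (- sqrt (2 * k)) \<longrightarrow> U23 k c = min (U2 k c) (U3 k c)) \<and>
    (\<not> (c < 1 - exp k * Phi (- sqrt (2 * k))) \<longrightarrow> U23 k c = U3 k c)"
proof -
  note k = assms(1)
  define a where "a = (1 + c) / 2"
  define b where "b = c + exp k * Phi (- sqrt (2 * k))"
  have U23: "U23 k c = H k c (min a b)" unfolding U23_def a_def b_def by simp
  have ca: "c < a" "a < 1" using assms unfolding a_def by simp_all
  have cb: "c < b" unfolding b_def using Phi_pos by simp
  have part1: "\<sigma> \<le> U23 k c" unfolding U23
    by (rule sigma_le_H) (use assms ca cb in auto)
  define t where "t = Phi_inv ((1 - c) / 2)"
  have Pt: "Phi t = (1 - c) / 2" unfolding t_def using assms by (intro Phi_Phi_inv) auto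
  have "Phi (- t) = a" using Pt Phi_neg[of t] unfolding a_def by simp
  then have Pia: "Phi_inv a = - t" using Phi_inv_Phi by metis
  have ac: "(a - c) / exp k = (1 - c) / (2 * exp k)" unfolding a_def by (simp add: field_simps)
  have Ha: "H k c a = U3 k c" unfolding H_def U3_def Pia ac t_def by simp
  have bc: "(b - c) / exp k = Phi (- sqrt (2 * k))" unfolding b_def by simp
  have Hb: "H k c b = U2 k c" unfolding H_def U2_def bc by (simp add: Phi_inv_Phi b_def)
  have part3: "\<not> (c < 1 - exp k * Phi (- sqrt (2 * k))) \<longrightarrow> U23 k c = U3 k c"
  proof
    assume "\<not> (c < 1 - exp k * Phi (- sqrt (2 * k)))"
    then have "1 \<le> b" unfolding b_def by simp
    then have "min a b = a" using ca by simp
    then show "U23 k c = U3 k c" using U23 Ha by simp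
  qed
  have part2: "c < 1 - exp k * Phi (- sqrt (2 * k)) \<longrightarrow> U23 k c = min (U2 k c) (U3 k c)"
  proof
    assume "c < 1 - exp k * Phi (- sqrt (2 * k))"
    then have b1: "b < 1" unfolding b_def by simp
    show "U23 k c = min (U2 k c) (U3 k c)"
    proof (cases "b \<le> a")
      case True
      have "(Phi_inv ((b - c) / exp k))\<^sup>2 = 2 * k" unfolding bc Phi_inv_Phi using k by simp
      then have "H k c b \<le> H k c a"
        using H_mono[OF k assms(2) cb True ca(2)] by simp
      moreover have "min a b = b" using True by simp
      ultimately show ?thesis using U23 Ha Hb by simp
    next
      case False
      then have ab: "a \<le> b" by simp
      define xa where "xa = Phi_inv a"
      define ya where "ya = Phi_inv ((a - c) / exp k)"
      have "Phi t < Phi 0" using Pt Phi_0 assms by simp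
      then have t0: "t < 0" by (simp add: Phi_less_iff)
      have xa: "xa = - t" "xa \<ge> 0" unfolding xa_def Pia using t0 by simp_all
      have pos: "0 < (1 - c) / (2 * exp k)" "(1 - c) / (2 * exp k) < 1"
        using H_point[OF k ca(1) ca(2) assms(2)] ac by simp_all
      have Pya: "Phi ya = Phi t / exp k" unfolding ya_def ac Pt
        using Phi_Phi_inv[OF pos] by simp
      define r where "r = sqrt (xa\<^sup>2 + 2 * k)"
      have "exp k * Phi (- r) \<le> Phi t"
        using mills2[OF xa(2) k] xa(1) unfolding r_def by simp
      then have "Phi (- r) \<le> Phi ya" unfolding Pya by (simp add: field_simps)
      then have ry: "- r \<le> ya" by (simp add: Phi_le_iff)
      have "1 \<le> exp k" using k by simp
      then have "Phi ya \<le> Phi t" unfolding Pya using Phi_pos[of t] by (simp add: divide_simps)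
      then have "ya \<le> t" by (simp add: Phi_le_iff)
      then have y0: "0 \<le> - ya" using t0 by simp
      have "(- ya)\<^sup>2 \<le> r\<^sup>2" using power_mono[OF _ y0, of r 2] ry by simp
      also have "r\<^sup>2 = xa\<^sup>2 + 2 * k" unfolding r_def using k by simp
      finally have cond: "ya\<^sup>2 \<le> xa\<^sup>2 + 2 * k" by simp
      have "H k c a \<le> H k c b"
        using H_mono[OF k assms(2) ca(1) ab b1] cond xa_def ya_def by simp
      moreover have "min a b = a" using ab by simp
      ultimately show ?thesis using U23 Ha Hb by simp
    qed
  qed
  show ?thesis using part1 part2 part3 by blast
qed


end
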